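(* Let $U:\mathbb{C}^*\to\mathbb{C}$ be a reasonable expansion with unique restrictions between locally small categories, and assume that all morphisms in $\mathbb{C}$ are monomorphisms. Then for every $A\in\mathrm{Ob}(\mathbb{C})$, $$t_{\mathbb{C}}(A)\le\sum_{\mathcal{A}\in U^{-1}(A)}t_{\mathbb{C}^*}(\mathcal{A}).$$ Consequently, if $U^{-1}(A)$ is finite and $t_{\mathbb{C}^*}(\mathcal{A})<\infty$ for all $\mathcal{A}\in U^{-1}(A)$, then $t_{\mathbb{C}}(A)<\infty$.
   Context: An expansion of $\mathbb{C}$ is a category $\mathbb{C}^*$ with a functor $U:\mathbb{C}^*\to\mathbb{C}$ surjective on objects and injective on hom-sets; we regard $\hom_{\mathbb{C}^*}(\mathcal{A},\mathcal{B})\subseteq\hom_{\mathbb{C}}(U\mathcal{A},U\mathcal{B})$, and $U^{-1}(A)=\{\mathcal{A}:U(\mathcal{A})=A\}$. $U$ is reasonable if for every $e\in\hom(A,B)$ and $\mathcal{A}\in U^{-1}(A)$ there is $\mathcal{B}\in U^{-1}(B)$ with $e\in\hom(\mathcal{A},\mathcal{B})$; it has unique restrictions if for every $\mathcal{B}\in\mathrm{Ob}(\mathbb{C}^* )$ and $e\in\hom(A,U(\mathcal{B}))$ there is exactly one $\mathcal{A}\in U^{-1}(A)$ with $e\in\hom(\mathcal{A},\mathcal{B})$. In a category $\mathbb{D}$: $C\to(B)^A_{k,t}$ means that for every $\chi:\hom(A,C)\to\{0,\dots,k-1\}$ there is $w\in\hom(B,C)$ with $|\chi(w\cdot\hom(A,B))|\le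 t$; $t_{\mathbb{D}}(A)$ is the least positive $n$ such that for all $k\ge2$ and all $B$ there is $C$ with $C\to(B)^A_{k,n}$, and $\infty$ otherwise. A sum with an infinite term or infinitely many terms is $\infty$. *)

theory Defs
  imports Main "HOL-Library.Extended_Nat"
begin

text \<open>A (locally small) category, with objects of type 'o and morphisms of type 'm.
  Hom sets are indexed by pairs of objects (they need not be disjoint as sets of
  'm-values); comp g f is "g after f".\<close>
record ('o, 'm) cat =
  Ob :: "'o set"
  Hom :: "'o \<Rightarrow> 'o \<Rightarrow> 'm set"
  comp :: "'m \<Rightarrow> 'm \<Rightarrow> 'm"
  ident :: "'o \<Rightarrow> 'm"

definition category :: "('o, 'm) cat \<Rightarrow> bool" where
  "category C \<longleftrightarrow>
     (\<forall>A\<in>Ob C. ident C A \<in> Hom C A A) \<and>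
     (\<forall>A\<in>Ob C. \<forall>B\<in>Ob C. \<forall>D\<in>Ob C. \<forall>f\<in>Hom C A B. \<forall>g\<in>Hom C B D.
        comp C g f \<in> Hom C A D) \<and>
     (\<forall>A\<in>Ob C. \<forall>B\<in>Ob C. \<forall>D\<in>Ob C. \<forall>E\<in>Ob C.
        \<forall>f\<in>Hom C A B. \<forall>g\<in>Hom C B D. \<forall>h\<in>Hom C D E.
        comp C h (comp C g f) = comp C (comp C h g) f) \<and>
     (\<forall>A\<in>Ob C. \<forall>B\<in>Ob C. \<forall>f\<in>Hom C A B.
        comp C (ident C B) f = f \<and> comp C f (ident C A) = f)"

definition all_mono :: "('o, 'm) cat \<Rightarrow> bool" where
  "all_mono C \<longleftrightarrow>
     (\<forall>A\<in>Ob C. \<forall>B\<in>Ob C. \<forall>D\<in>Ob C. \<forall>f\<in>Hom C B D. \<forall>g\<in>Hom C A B. \<forall>h\<in>Hom C A B.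
        comp C f g = comp C f h \<longrightarrow> g = h)"

text \<open>Expansion: U is surjective on objects; following the paper's convention
  hom_{C*}(A*,B*) is a subset of hom_C(U A*, U B*) (so U is the inclusion on
  morphisms, hence injective on hom sets), and U preserves composition and identities.\<close>
definition expansion :: "('o, 'm) cat \<Rightarrow> ('p, 'm) cat \<Rightarrow> ('p \<Rightarrow> 'o) \<Rightarrow> bool" where
  "expansion C Cs U \<longleftrightarrow>
     category C \<and> category Cs \<and> U ` Ob Cs = Ob C \<and>
     (\<forall>A\<in>Ob Cs. \<forall>B\<in>Ob Cs. Hom Cs A B \<subseteq> Hom C (U A) (U B)) \<and>
     (\<forall>A\<in>Ob Cs. ident Cs A = ident C (U A)) \<and>
     (\<forall>A\<in>Ob Cs. \<forall>B\<in>Ob Cs. \<forall>D\<in>Ob Cs. \<forall>f\<in>Hom Cs A B. \<forall>g\<in>Hom Cs B D.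
        comp Cs g f = comp C g f)"

definition preimage_ob :: "('p, 'm) cat \<Rightarrow> ('p \<Rightarrow> 'o) \<Rightarrow> 'o \<Rightarrow> 'p set" where
  "preimage_ob Cs U A = {As \<in> Ob Cs. U As = A}"

definition reasonable :: "('o, 'm) cat \<Rightarrow> ('p, 'm) cat \<Rightarrow> ('p \<Rightarrow> 'o) \<Rightarrow> bool" where
  "reasonable C Cs U \<longleftrightarrow>
     (\<forall>A\<in>Ob C. \<forall>B\<in>Ob C. \<forall>e\<in>Hom C A B. \<forall>As\<in>preimage_ob Cs U A.
        \<exists>Bs\<in>preimage_ob Cs U B. e \<in> Hom Cs As Bs)"

definition unique_restrictions :: "('o, 'm) cat \<Rightarrow> ('p, 'm) cat \<Rightarrow> ('p \<Rightarrow> 'o) \<Rightarrow> bool" where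
  "unique_restrictions C Cs U \<longleftrightarrow>
     (\<forall>Bs\<in>Ob Cs. \<forall>A\<in>Ob C. \<forall>e\<in>Hom C A (U Bs).
        \<exists>!As. As \<in> preimage_ob Cs U A \<and> e \<in> Hom Cs As Bs)"

text \<open>C \<rightarrow> (B)^A_{k,t}: colourings are functions on hom(A,C) with values in {0..k-1}.\<close>
definition arrows :: "('o, 'm) cat \<Rightarrow> 'o \<Rightarrow> 'o \<Rightarrow> 'o \<Rightarrow> nat \<Rightarrow> nat \<Rightarrow> bool" where
  "arrows D C B A k t \<longleftrightarrow>
     (\<forall>\<chi> :: 'm \<Rightarrow> nat. (\<forall>f\<in>Hom D A C. \<chi> f < k) \<longrightarrow>
        (\<exists>w\<in>Hom D B C. card (\<chi> ` ((\<lambda>f. comp D w f) ` Hom D A B)) \<le> t))"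

definition small_ramsey_ok :: "('o, 'm) cat \<Rightarrow> 'o \<Rightarrow> nat \<Rightarrow> bool" where
  "small_ramsey_ok D A n \<longleftrightarrow>
     (\<forall>k\<ge>2. \<forall>B\<in>Ob D. \<exists>C\<in>Ob D. arrows D C B A k n)"

definition ramsey_deg :: "('o, 'm) cat \<Rightarrow> 'o \<Rightarrow> enat" where
  "ramsey_deg D A =
     (if \<exists>n>0. small_ramsey_ok D A n
      then enat (LEAST n. n > 0 \<and> small_ramsey_ok D A n) else \<infinity>)"

definition esum :: "('a \<Rightarrow> enat) \<Rightarrow> 'a set \<Rightarrow> enat" where
  "esum f S = (if finite S then sum f S else \<infinity>)"

end

theory Submission
  imports Defs
begin

lemma key:
  fixes C :: "('o, 'm) cat" and Cs :: "('p, 'm) cat" and U :: "'p \<Rightarrow> 'o"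
  assumes exp: "expansion C Cs U" and A: "A \<in> Ob C"
    and fin: "finite S" and sub: "S \<subseteq> preimage_ob Cs U A"
    and ok: "\<forall>As\<in>S. small_ramsey_ok Cs As (t As)"
    and k: "k \<ge> 2"
  shows "\<forall>B0\<in>Ob Cs. \<exists>Cn\<in>Ob Cs. \<forall>\<chi>::'m\<Rightarrow>nat. (\<forall>f\<in>Hom C A (U Cn). \<chi> f < k) \<longrightarrow>
           (\<exists>w\<in>Hom Cs B0 Cn. \<forall>As\<in>S. card (\<chi> ` ((\<lambda>f. comp C w f) ` Hom Cs As B0)) \<le> t As)"
  using fin sub ok
proof (induction S rule: finite_induct)
  have catC: "category C" and catCs: "category Cs" using exp unfolding expansion_def by auto
  case empty
  show ?case
  proof
    fix B0 assume "B0 \<in> Ob Cs"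
    then show "\<exists>Cn\<in>Ob Cs. \<forall>\<chi>::'m\<Rightarrow>nat. (\<forall>f\<in>Hom C A (U Cn). \<chi> f < k) \<longrightarrow>
           (\<exists>w\<in>Hom Cs B0 Cn. \<forall>As\<in>{}. card (\<chi> ` ((\<lambda>f. comp C w f) ` Hom Cs As B0)) \<le> t As)"
      using catCs unfolding category_def by blast
  qed
next
  case (insert a S)
  have catC: "category C" and catCs: "category Cs" using exp unfolding expansion_def by auto
  have Uob: "\<And>X. X \<in> Ob Cs \<Longrightarrow> U X \<in> Ob C" using exp unfolding expansion_def by auto
  have HS: "\<And>X Y. X \<in> Ob Cs \<Longrightarrow> Y \<in> Ob Cs \<Longrightarrow> Hom Cs X Y \<subseteq> Hom C (U X) (U Y)"
    using exp unfolding expansion_def by auto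
  have ceq: "\<And>X Y Z f g. X \<in> Ob Cs \<Longrightarrow> Y \<in> Ob Cs \<Longrightarrow> Z \<in> Ob Cs \<Longrightarrow> f \<in> Hom Cs X Y
     \<Longrightarrow> g \<in> Hom Cs Y Z \<Longrightarrow> comp Cs g f = comp C g f"
    using exp unfolding expansion_def by auto
  have cC: "\<And>X Y Z f g. X \<in> Ob C \<Longrightarrow> Y \<in> Ob C \<Longrightarrow> Z \<in> Ob C \<Longrightarrow> f \<in> Hom C X Y
     \<Longrightarrow> g \<in> Hom C Y Z \<Longrightarrow> comp C g f \<in> Hom C X Z"
    using catC unfolding category_def by auto
  have cCs: "\<And>X Y Z f g. X \<in> Ob Cs \<Longrightarrow> Y \<in> Ob Cs \<Longrightarrow> Z \<in> Ob Cs \<Longrightarrow> f \<in> Hom Cs X Y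
     \<Longrightarrow> g \<in> Hom Cs Y Z \<Longrightarrow> comp Cs g f \<in> Hom Cs X Z"
    using catCs unfolding category_def by auto
  have assoc: "\<And>X Y Z W f g h. X \<in> Ob C \<Longrightarrow> Y \<in> Ob C \<Longrightarrow> Z \<in> Ob C \<Longrightarrow> W \<in> Ob C \<Longrightarrow>
     f \<in> Hom C X Y \<Longrightarrow> g \<in> Hom C Y Z \<Longrightarrow> h \<in> Hom C Z W \<Longrightarrow>
     comp C h (comp C g f) = comp C (comp C h g) f"
    using catC unfolding category_def by metis
  have aOb: "a \<in> Ob Cs" "U a = A" using insert.prems unfolding preimage_ob_def by auto
  have IH: "\<forall>B0\<in>Ob Cs. \<exists>Cn\<in>Ob Cs. \<forall>\<chi>::'m\<Rightarrow>nat. (\<forall>f\<in>Hom C A (U Cn). \<chi> f < k) \<longrightarrow>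
           (\<exists>w\<in>Hom Cs B0 Cn. \<forall>As\<in>S. card (\<chi> ` ((\<lambda>f. comp C w f) ` Hom Cs As B0)) \<le> t As)"
    using insert by auto
  show ?case
  proof
    fix B0 assume B0: "B0 \<in> Ob Cs"
    from IH B0 obtain C' where C': "C' \<in> Ob Cs" and P': "\<forall>\<chi>::'m\<Rightarrow>nat. (\<forall>f\<in>Hom C A (U C'). \<chi> f < k) \<longrightarrow>
           (\<exists>w\<in>Hom Cs B0 C'. \<forall>As\<in>S. card (\<chi> ` ((\<lambda>f. comp C w f) ` Hom Cs As B0)) \<le> t As)"
      by blast
    have "small_ramsey_ok Cs a (t a)" using insert.prems by auto
    then obtain Cn where Cn: "Cn \<in> Ob Cs" and arr: "arrows Cs Cn C' a k (t a)"
      using C' k unfolding small_ramsey_ok_def by blast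
    show "\<exists>Cn\<in>Ob Cs. \<forall>\<chi>::'m\<Rightarrow>nat. (\<forall>f\<in>Hom C A (U Cn). \<chi> f < k) \<longrightarrow>
           (\<exists>w\<in>Hom Cs B0 Cn. \<forall>As\<in>insert a S. card (\<chi> ` ((\<lambda>f. comp C w f) ` Hom Cs As B0)) \<le> t As)"
    proof (intro bexI[of _ Cn] allI impI)
      fix \<chi> :: "'m \<Rightarrow> nat" assume chi: "\<forall>f\<in>Hom C A (U Cn). \<chi> f < k"
      have chia: "\<forall>f\<in>Hom Cs a Cn. \<chi> f < k" using HS[OF aOb(1) Cn] aOb chi by auto
      then obtain w1 where w1: "w1 \<in> Hom Cs C' Cn" and
        c1: "card (\<chi> ` ((\<lambda>f. comp Cs w1 f) ` Hom Cs a C')) \<le> t a"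
        using arr unfolding arrows_def by blast
      have w1C: "w1 \<in> Hom C (U C') (U Cn)" using HS[OF C' Cn] w1 by auto
      define \<chi>' where "\<chi>' = (\<lambda>f. \<chi> (comp C w1 f))"
      have "\<forall>f\<in>Hom C A (U C'). \<chi>' f < k"
        unfolding \<chi>'_def using cC[OF A Uob[OF C'] Uob[OF Cn] _ w1C] chi by auto
      then obtain w2 where w2: "w2 \<in> Hom Cs B0 C'" and
        c2: "\<forall>As\<in>S. card (\<chi>' ` ((\<lambda>f. comp C w2 f) ` Hom Cs As B0)) \<le> t As"
        using P' by blast
      have w2C: "w2 \<in> Hom C (U B0) (U C')" using HS[OF B0 C'] w2 by auto
      have weq: "comp Cs w1 w2 = comp C w1 w2" using ceq[OF B0 C' Cn w2 w1] .
      have wH: "comp C w1 w2 \<in> Hom Cs B0 Cn" using cCs[OF B0 C' Cn w2 w1] weq by simp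
      show "\<exists>w\<in>Hom Cs B0 Cn. \<forall>As\<in>insert a S. card (\<chi> ` ((\<lambda>f. comp C w f) ` Hom Cs As B0)) \<le> t As"
      proof (intro bexI[OF _ wH] ballI)
        fix As assume As: "As \<in> insert a S"
        show "card (\<chi> ` ((\<lambda>f. comp C (comp C w1 w2) f) ` Hom Cs As B0)) \<le> t As"
        proof (cases "As = a")
          case True
          have sub1: "\<chi> ` ((\<lambda>f. comp C (comp C w1 w2) f) ` Hom Cs a B0)
              \<subseteq> \<chi> ` ((\<lambda>f. comp Cs w1 f) ` Hom Cs a C')"
          proof
            fix y assume "y \<in> \<chi> ` ((\<lambda>f. comp C (comp C w1 w2) f) ` Hom Cs a B0)"
            then obtain f where f: "f \<in> Hom Cs a B0" and y: "y = \<chi> (comp C (comp C w1 w2) f)" by auto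
            have fC: "f \<in> Hom C A (U B0)" using HS[OF aOb(1) B0] f aOb by auto
            have "comp C (comp C w1 w2) f = comp C w1 (comp C w2 f)"
              using assoc[OF A Uob[OF B0] Uob[OF C'] Uob[OF Cn] fC w2C w1C] by simp
            also have "\<dots> = comp Cs w1 (comp Cs w2 f)"
              using ceq[OF aOb(1) B0 C' f w2] ceq[OF aOb(1) C' Cn cCs[OF aOb(1) B0 C' f w2] w1] by simp
            finally show "y \<in> \<chi> ` ((\<lambda>f. comp Cs w1 f) ` Hom Cs a C')"
              using y cCs[OF aOb(1) B0 C' f w2] by auto
          qed
          have "\<chi> ` ((\<lambda>f. comp Cs w1 f) ` Hom Cs a C') \<subseteq> {..<k}"
            using chia cCs[OF aOb(1) C' Cn _ w1] by auto
          then have "finite (\<chi> ` ((\<lambda>f. comp Cs w1 f) ` Hom Cs a C'))" using finite_subset by blast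
          then show ?thesis using True card_mono[OF _ sub1] c1 by fastforce
        next
          case False
          then have AsS: "As \<in> S" using As by auto
          then have AsOb: "As \<in> Ob Cs" "U As = A" using insert.prems unfolding preimage_ob_def by auto
          have "\<chi> ` ((\<lambda>f. comp C (comp C w1 w2) f) ` Hom Cs As B0)
              = \<chi>' ` ((\<lambda>f. comp C w2 f) ` Hom Cs As B0)"
          proof -
            have "\<And>f. f \<in> Hom Cs As B0 \<Longrightarrow> comp C (comp C w1 w2) f = comp C w1 (comp C w2 f)"
            proof -
              fix f assume f: "f \<in> Hom Cs As B0"
              have fC: "f \<in> Hom C A (U B0)" using HS[OF AsOb(1) B0] f AsOb by auto
              show "comp C (comp C w1 w2) f = comp C w1 (comp C w2 f)"
                using assoc[OF A Uob[OF B0] Uob[OF C'] Uob[OF Cn] fC w2C w1C] by simp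
            qed
            then show ?thesis unfolding \<chi>'_def image_image by (auto intro!: image_cong)
          qed
          then show ?thesis using c2 AsS by simp
        qed
      qed
    qed (rule Cn)
  qed
qed

lemma enat_sum: "finite S \<Longrightarrow> (\<Sum>x\<in>S. enat (f x)) = enat (sum f S)"
  by (induction S rule: finite_induct) (auto simp: zero_enat_def)

theorem theorem6p1:
  fixes C :: "('o, 'm) cat" and Cs :: "('p, 'm) cat" and U :: "'p \<Rightarrow> 'o"
  assumes "expansion C Cs U"
    and "reasonable C Cs U"
    and "unique_restrictions C Cs U"
    and "all_mono C"
    and "A \<in> Ob C"
  shows "ramsey_deg C A \<le> esum (ramsey_deg Cs) (preimage_ob Cs U A) \<and>
           (finite (preimage_ob Cs U A) \<and> (\<forall>As\<in>preimage_ob Cs U A. ramsey_deg Cs As < \<infinity>)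
           \<longrightarrow> ramsey_deg C A < \<infinity>)"
proof -
  note exp = assms(1) and ur = assms(3) and A = assms(5)
  define P where "P = preimage_ob Cs U A"
  have Pne: "P \<noteq> {}"
  proof -
    have "A \<in> U ` Ob Cs" using exp A unfolding expansion_def by simp
    then obtain X where "X \<in> Ob Cs" "U X = A" by blast
    then have "X \<in> P" unfolding P_def preimage_ob_def by simp
    then show ?thesis by blast
  qed
  have HS: "\<And>X Y. X \<in> Ob Cs \<Longrightarrow> Y \<in> Ob Cs \<Longrightarrow> Hom Cs X Y \<subseteq> Hom C (U X) (U Y)"
    using exp unfolding expansion_def by auto
  have Uob: "\<And>X. X \<in> Ob Cs \<Longrightarrow> U X \<in> Ob C" using exp unfolding expansion_def by auto
  have good: "ramsey_deg C A \<le> esum (ramsey_deg Cs) P \<and> esum (ramsey_deg Cs) P < \<infinity>"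
    if finP: "finite P" and fin: "\<forall>As\<in>P. ramsey_deg Cs As < \<infinity>"
  proof -
    define t where "t = (\<lambda>As. LEAST n. n > 0 \<and> small_ramsey_ok Cs As n)"
    have ex: "\<exists>n>0. small_ramsey_ok Cs As n" if "As \<in> P" for As
      using fin that unfolding ramsey_deg_def by (auto split: if_splits)
    have rd: "ramsey_deg Cs As = enat (t As)" if "As \<in> P" for As
      using ex[OF that] unfolding ramsey_deg_def t_def by simp
    have tok: "t As > 0 \<and> small_ramsey_ok Cs As (t As)" if "As \<in> P" for As
      using ex[OF that] unfolding t_def by (metis (mono_tags, lifting) LeastI_ex)
    have es: "esum (ramsey_deg Cs) P = enat (sum t P)"
    proof -
      have "esum (ramsey_deg Cs) P = (\<Sum>As\<in>P. enat (t As))"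
        unfolding esum_def using finP rd by (simp cong: sum.cong)
      also have "\<dots> = enat (sum t P)" using enat_sum[OF finP] .
      finally show ?thesis .
    qed
    have pos: "sum t P > 0"
    proof -
      obtain x where x: "x \<in> P" using Pne by blast
      have "t x \<le> sum t P" using member_le_sum[OF x, of t] finP by simp
      then show ?thesis using tok[OF x] by linarith
    qed
    have okC: "small_ramsey_ok C A (sum t P)"
      unfolding small_ramsey_ok_def
    proof (intro allI impI ballI)
      fix k :: nat and B assume k: "2 \<le> k" and B: "B \<in> Ob C"
      have "B \<in> U ` Ob Cs" using exp B unfolding expansion_def by simp
      then obtain B0 where B0: "B0 \<in> Ob Cs" "U B0 = B" by blast
      have K: "\<forall>B0\<in>Ob Cs. \<exists>Cn\<in>Ob Cs. \<forall>\<chi>::'m\<Rightarrow>nat. (\<forall>f\<in>Hom C A (U Cn). \<chi> f < k) \<longrightarrow>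
           (\<exists>w\<in>Hom Cs B0 Cn. \<forall>As\<in>P. card (\<chi> ` ((\<lambda>f. comp C w f) ` Hom Cs As B0)) \<le> t As)"
        by (rule key[OF exp A finP _ _ k]) (use tok in \<open>auto simp: P_def\<close>)
      then obtain Cn where Cn: "Cn \<in> Ob Cs" and KC: "\<forall>\<chi>::'m\<Rightarrow>nat. (\<forall>f\<in>Hom C A (U Cn). \<chi> f < k) \<longrightarrow>
           (\<exists>w\<in>Hom Cs B0 Cn. \<forall>As\<in>P. card (\<chi> ` ((\<lambda>f. comp C w f) ` Hom Cs As B0)) \<le> t As)"
        using B0 by blast
      have HU: "Hom C A B = (\<Union>As\<in>P. Hom Cs As B0)"
      proof
        show "Hom C A B \<subseteq> (\<Union>As\<in>P. Hom Cs As B0)"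
        proof
          fix e assume "e \<in> Hom C A B"
          then have eH: "e \<in> Hom C A (U B0)" using B0(2) by simp
          have UR: "\<forall>Bs\<in>Ob Cs. \<forall>A\<in>Ob C. \<forall>e\<in>Hom C A (U Bs).
              \<exists>!As. As \<in> preimage_ob Cs U A \<and> e \<in> Hom Cs As Bs"
            using ur unfolding unique_restrictions_def .
          have "\<exists>!As. As \<in> preimage_ob Cs U A \<and> e \<in> Hom Cs As B0"
            using bspec[OF bspec[OF bspec[OF UR B0(1)] A] eH] .
          then have "\<exists>As. As \<in> preimage_ob Cs U A \<and> e \<in> Hom Cs As B0"
            by (rule ex1_implies_ex)
          then show "e \<in> (\<Union>As\<in>P. Hom Cs As B0)" unfolding P_def by auto
        qed
        show "(\<Union>As\<in>P. Hom Cs As B0) \<subseteq> Hom C A B"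
          using HS B0 unfolding P_def preimage_ob_def by fastforce
      qed
      show "\<exists>Ca\<in>Ob C. arrows C Ca B A k (sum t P)"
      proof (intro bexI[of _ "U Cn"])
        show "U Cn \<in> Ob C" using Uob Cn .
        show "arrows C (U Cn) B A k (sum t P)"
          unfolding arrows_def
        proof (intro allI impI)
          fix \<chi> :: "'m \<Rightarrow> nat" assume chi: "\<forall>f\<in>Hom C A (U Cn). \<chi> f < k"
          then obtain w where w: "w \<in> Hom Cs B0 Cn" and
            c: "\<forall>As\<in>P. card (\<chi> ` ((\<lambda>f. comp C w f) ` Hom Cs As B0)) \<le> t As"
            using KC by blast
          have wC: "w \<in> Hom C B (U Cn)" using HS[OF B0(1) Cn] w B0 by auto
          have "\<chi> ` ((\<lambda>f. comp C w f) ` Hom C A B) = (\<Union>As\<in>P. \<chi> ` ((\<lambda>f. comp C w f) ` Hom Cs As B0))"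
            unfolding HU image_UN ..
          then have "card (\<chi> ` ((\<lambda>f. comp C w f) ` Hom C A B))
              \<le> (\<Sum>As\<in>P. card (\<chi> ` ((\<lambda>f. comp C w f) ` Hom Cs As B0)))"
            using card_UN_le[OF finP] by simp
          also have "\<dots> \<le> sum t P" using c by (intro sum_mono) auto
          finally show "\<exists>w\<in>Hom C B (U Cn). card (\<chi> ` ((\<lambda>f. comp C w f) ` Hom C A B)) \<le> sum t P"
            using wC by blast
        qed
      qed
    qed
    have "ramsey_deg C A = enat (LEAST n. n > 0 \<and> small_ramsey_ok C A n)"
      unfolding ramsey_deg_def using okC pos by auto
    also have "\<dots> \<le> enat (sum t P)" using okC pos by (simp add: Least_le)
    finally show ?thesis using es by simp
  qed
  have inf: "esum (ramsey_deg Cs) P = \<infinity>"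
    if nf: "\<not> (finite P \<and> (\<forall>As\<in>P. ramsey_deg Cs As < \<infinity>))"
  proof (cases "finite P")
    case False then show ?thesis unfolding esum_def by simp
  next
    case True
    then obtain x where x: "x \<in> P" "ramsey_deg Cs x = \<infinity>" using nf True by auto
    have "sum (ramsey_deg Cs) P = ramsey_deg Cs x + sum (ramsey_deg Cs) (P - {x})"
      using True x(1) sum.remove by metis
    then show ?thesis unfolding esum_def using True x by simp
  qed
  have "ramsey_deg C A \<le> esum (ramsey_deg Cs) P \<and>
           (finite P \<and> (\<forall>As\<in>P. ramsey_deg Cs As < \<infinity>) \<longrightarrow> ramsey_deg C A < \<infinity>)"
  proof (cases "finite P \<and> (\<forall>As\<in>P. ramsey_deg Cs As < \<infinity>)")
    case True
    then show ?thesis using good by (meson order_le_less_trans)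
  next
    case False
    then show ?thesis using inf by auto
  qed
  then show ?thesis unfolding P_def .
qed

end
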